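(* Let $F\colon\mathbb{R}^n\to\mathbb{R}^n$ be a polynomial map, let $g_1,\dots,g_r,h_1,\dots,h_s$ be real polynomials on $\mathbb{R}^n$ with $\Omega:=\{x: g_i(x)\le0\ \forall i,\ h_j(x)=0\ \forall j\}$ nonempty, fix $\rho>0$, let $\phi(x,y):=\langle F(x),x-y\rangle-\frac{\rho}{2}\|x-y\|^2$, $\psi(x):=\sup_{y\in\Omega}\phi(x,y)$, and $\Omega(x):=\{y\in\Omega:\psi(x)=\phi(x,y)\}$. Assume (MFCQ) holds on $\Omega$. Then for all $x\in\mathbb{R}^n$, $$\partial^\circ\psi(x)\subset\mathrm{co}\Big(\bigcup_{y\in\Omega(x)}\{v\in\mathbb{R}^n: (v,0)\in\nabla\phi(x,y)-\{0\}\times N(\Omega,y)\}\Big).$$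
   Context: $\psi$ is locally Lipschitz; $\partial^\circ\psi(x)$ is its Clarke subdifferential $\mathrm{co}\{\lim_k\nabla\psi(x^k):x^k\to x,\ \psi\text{ differentiable at }x^k\}$; $\mathrm{co}$ denotes convex hull. $\nabla\phi(x,y)$ is the full gradient in $\mathbb{R}^n\times\mathbb{R}^n$. For $y\in\Omega$, $N(\Omega,y):=\{\sum_{i=1}^r\mu_i\nabla g_i(y)+\sum_{j=1}^s\kappa_j\nabla h_j(y): \mu_i,\kappa_j\in\mathbb{R},\ \mu_i\ge0,\ \mu_i g_i(y)=0\}$. (MFCQ) holds on $\Omega$ means: for every $x\in\Omega$, the vectors $\nabla h_j(x)$ are linearly independent and there exists $v$ with $\langle\nabla g_i(x),v\rangle<0$ for all $i$ with $g_i(x)=0$ and $\langle\nabla h_j(x),v\rangle=0$ for all $j$. *)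

theory Defs
  imports "HOL-Analysis.Analysis"
begin

inductive_set poly_fun :: "(real^'n \<Rightarrow> real) set" where
  pf_const: "(\<lambda>x. c) \<in> poly_fun"
| pf_coord: "(\<lambda>x. x $ i) \<in> poly_fun"
| pf_add: "p \<in> poly_fun \<Longrightarrow> q \<in> poly_fun \<Longrightarrow> (\<lambda>x. p x + q x) \<in> poly_fun"
| pf_mult: "p \<in> poly_fun \<Longrightarrow> q \<in> poly_fun \<Longrightarrow> (\<lambda>x. p x * q x) \<in> poly_fun"

definition poly_map :: "(real^'n \<Rightarrow> real^'n) \<Rightarrow> bool" where
  "poly_map F \<longleftrightarrow> (\<forall>i. (\<lambda>x. F x $ i) \<in> poly_fun)"

definition grad :: "('a::real_inner \<Rightarrow> real) \<Rightarrow> 'a \<Rightarrow> 'a" where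
  "grad f x = (THE D. GDERIV f x :> D)"

definition clarke_subdiff :: "('a::euclidean_space \<Rightarrow> real) \<Rightarrow> 'a \<Rightarrow> 'a set" where
  "clarke_subdiff f x = convex hull
     {v. \<exists>xs gs. xs \<longlonglongrightarrow> x \<and> (\<forall>k. GDERIV f (xs k) :> gs k) \<and> gs \<longlonglongrightarrow> v}"

definition feas :: "(nat \<Rightarrow> 'a \<Rightarrow> real) \<Rightarrow> nat \<Rightarrow> (nat \<Rightarrow> 'a \<Rightarrow> real) \<Rightarrow> nat \<Rightarrow> 'a set" where
  "feas g r h s = {x. (\<forall>i<r. g i x \<le> 0) \<and> (\<forall>j<s. h j x = 0)}"

definition normal_cone :: "(nat \<Rightarrow> 'a::real_inner \<Rightarrow> real) \<Rightarrow> nat \<Rightarrow> (nat \<Rightarrow> 'a \<Rightarrow> real) \<Rightarrow> nat \<Rightarrow> 'a \<Rightarrow> 'a set" where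
  "normal_cone g r h s y =
     {(\<Sum>i<r. \<mu> i *\<^sub>R grad (g i) y) + (\<Sum>j<s. \<kappa> j *\<^sub>R grad (h j) y) | \<mu> \<kappa>.
        (\<forall>i<r. \<mu> i \<ge> 0 \<and> \<mu> i * g i y = 0)}"

definition MFCQ :: "(nat \<Rightarrow> 'a::real_inner \<Rightarrow> real) \<Rightarrow> nat \<Rightarrow> (nat \<Rightarrow> 'a \<Rightarrow> real) \<Rightarrow> nat \<Rightarrow> bool" where
  "MFCQ g r h s \<longleftrightarrow> (\<forall>x \<in> feas g r h s.
     (\<forall>c. (\<Sum>j<s. c j *\<^sub>R grad (h j) x) = 0 \<longrightarrow> (\<forall>j<s. c j = 0)) \<and>
     (\<exists>v. (\<forall>i<r. g i x = 0 \<longrightarrow> grad (g i) x \<bullet> v < 0) \<and> (\<forall>j<s. grad (h j) x \<bullet> v = 0)))"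

end

theory Submission
  imports Defs
begin


lemma gderiv_unique:
  assumes "GDERIV f x :> D" "GDERIV f x :> D'" shows "D = D'"
proof -
  have "(\<lambda>h. h \<bullet> D) = (\<lambda>h. h \<bullet> D')"
    using assms unfolding gderiv_def by (rule has_derivative_unique)
  then have "(D - D') \<bullet> D = (D - D') \<bullet> D'" by metis
  then have "(D - D') \<bullet> (D - D') = 0" by (simp add: inner_diff_right)
  then show ?thesis by simp
qed

lemma grad_eq: "GDERIV f x :> D \<Longrightarrow> grad f x = D"
  unfolding grad_def using gderiv_unique by blast

definition smooth :: "('a::real_inner \<Rightarrow> real) \<Rightarrow> bool" where
  "smooth f \<longleftrightarrow> (\<exists>G. continuous_on UNIV G \<and> (\<forall>x. GDERIV f x :> G x))"

lemma smoothD: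
  assumes "smooth f"
  shows "continuous_on UNIV (grad f)" "GDERIV f x :> grad f x"
proof -
  obtain G where G: "continuous_on UNIV G" "\<And>x. GDERIV f x :> G x"
    using assms unfolding smooth_def by blast
  have "grad f = G" using G(2) grad_eq by blast
  then show "continuous_on UNIV (grad f)" "GDERIV f x :> grad f x" using G by auto
qed

lemma smooth_cont:
  assumes "smooth f" shows "continuous_on UNIV f"
proof -
  have "\<And>x. isCont f x"
    using smoothD(2)[OF assms] unfolding gderiv_def
    by (meson has_derivative_continuous)
  then show ?thesis by (simp add: continuous_at_imp_continuous_on)
qed

lemma smooth_const: "smooth (\<lambda>x. c)"
  unfolding smooth_def by (intro exI[of _ "\<lambda>x. 0"]) (auto intro: GDERIV_const)

lemma smooth_add: "smooth f \<Longrightarrow> smooth g \<Longrightarrow> smooth (\<lambda>x. f x + g x)"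
  unfolding smooth_def
  apply (elim exE conjE)
  subgoal for F G
    by (rule exI[of _ "\<lambda>x. F x + G x"]) (auto intro: continuous_on_add GDERIV_add)
  done

lemma smooth_mult:
  assumes "smooth f" "smooth g" shows "smooth (\<lambda>x. f x * g x)"
proof -
  have cf: "continuous_on UNIV f" and cg: "continuous_on UNIV g"
    using assms smooth_cont by auto
  show ?thesis
  unfolding smooth_def
    apply (rule exI[of _ "\<lambda>x. f x *\<^sub>R grad g x + g x *\<^sub>R grad f x"])
    using assms cf cg by (auto intro!: continuous_intros GDERIV_mult smoothD)
qed

lemma smooth_minus: "smooth f \<Longrightarrow> smooth (\<lambda>x. - f x)"
  using smooth_mult[of "\<lambda>x. -1" f, OF smooth_const] by simp

lemma smooth_diff: "smooth f \<Longrightarrow> smooth g \<Longrightarrow> smooth (\<lambda>x. f x - g x)"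
  using smooth_add[of f "\<lambda>x. - g x", OF _ smooth_minus] by simp

lemma smooth_sum: "finite A \<Longrightarrow> (\<And>i. i \<in> A \<Longrightarrow> smooth (f i)) \<Longrightarrow> smooth (\<lambda>x. \<Sum>i\<in>A. f i x)"
  by (induction A rule: finite_induct) (auto intro: smooth_add smooth_const)

lemma smooth_coord: "smooth (\<lambda>x::real^'n. x $ i)"
  unfolding smooth_def
proof (intro exI[of _ "\<lambda>x. axis i 1"] conjI allI)
  show "continuous_on UNIV (\<lambda>x::real^'n. axis i (1::real))" by simp
  fix x :: "real^'n"
  have "((\<lambda>x. x $ i) has_derivative (\<lambda>h. h $ i)) (at x)"
    by (rule bounded_linear_imp_has_derivative) (simp add: bounded_linear_vec_nth)
  moreover have "(\<lambda>h::real^'n. h $ i) = (\<lambda>h. h \<bullet> axis i 1)"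
    by (simp add: inner_axis)
  ultimately show "GDERIV (\<lambda>x. x $ i) x :> axis i 1" unfolding gderiv_def by simp
qed

lemma smooth_poly: "p \<in> poly_fun \<Longrightarrow> smooth p"
  by (induction rule: poly_fun.induct) (auto intro: smooth_const smooth_coord smooth_add smooth_mult)

lemma gderiv_fst:
  assumes "GDERIV f (fst z) :> D" shows "GDERIV (\<lambda>z. f (fst z)) z :> (D, 0)"
proof -
  have "((\<lambda>z. f (fst z)) has_derivative (\<lambda>h. fst h \<bullet> D)) (at z)"
    using has_derivative_compose[OF has_derivative_fst[OF has_derivative_ident] assms[unfolded gderiv_def]]
    by simp
  then show ?thesis unfolding gderiv_def by (simp add: inner_Pair_0)
qed

lemma gderiv_snd:
  assumes "GDERIV f (snd z) :> D" shows "GDERIV (\<lambda>z. f (snd z)) z :> (0, D)"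
proof -
  have "((\<lambda>z. f (snd z)) has_derivative (\<lambda>h. snd h \<bullet> D)) (at z)"
    using has_derivative_compose[OF has_derivative_snd[OF has_derivative_ident] assms[unfolded gderiv_def]]
    by simp
  then show ?thesis unfolding gderiv_def by (simp add: inner_Pair_0)
qed

lemma smooth_fst: "smooth f \<Longrightarrow> smooth (\<lambda>z. f (fst z))"
  unfolding smooth_def
  apply (elim exE conjE)
  subgoal for G
    by (rule exI[of _ "\<lambda>z. (G (fst z), 0)"]) (auto intro!: continuous_intros gderiv_fst
       intro: continuous_on_compose2[of UNIV G])
  done

lemma smooth_snd: "smooth f \<Longrightarrow> smooth (\<lambda>z. f (snd z))"
  unfolding smooth_def
  apply (elim exE conjE)
  subgoal for G
    by (rule exI[of _ "\<lambda>z. (0, G (snd z))"]) (auto intro!: continuous_intros gderiv_snd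
       intro: continuous_on_compose2[of UNIV G])
  done

lemma gderiv_slice2:
  assumes "GDERIV f (a, y) :> D" shows "GDERIV (\<lambda>y. f (a, y)) y :> snd D"
proof -
  have "((\<lambda>y. (a, y)) has_derivative (\<lambda>h. (0, h))) (at y)"
    by (intro derivative_eq_intros) auto
  from has_derivative_compose[OF this assms[unfolded gderiv_def]]
  show ?thesis unfolding gderiv_def by (simp add: inner_Pair_0 inner_commute)
qed

lemma gderiv_slice1:
  assumes "GDERIV f (x, b) :> D" shows "GDERIV (\<lambda>x. f (x, b)) x :> fst D"
proof -
  have "((\<lambda>x. (x, b)) has_derivative (\<lambda>h. (h, 0))) (at x)"
    by (intro derivative_eq_intros) auto
  from has_derivative_compose[OF this assms[unfolded gderiv_def]]
  show ?thesis unfolding gderiv_def by (simp add: inner_Pair_0 inner_commute)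
qed



lemma deriv_maxsq: "DERIV (\<lambda>t::real. (max 0 t)\<^sup>2) t :> 2 * max 0 t"
proof (cases "t = 0")
  case True
  have eq: "(max 0 u)\<^sup>2 / u = max 0 u" for u :: real
    by (cases "u \<le> 0") (auto simp: power2_eq_square)
  have "((\<lambda>u::real. max 0 u) \<longlongrightarrow> 0) (at 0)"
  proof (rule tendsto_sandwich[of "\<lambda>u. - \<bar>u\<bar>" _ _ "\<lambda>u. \<bar>u\<bar>"])
    show "\<forall>\<^sub>F u in at 0. - \<bar>u\<bar> \<le> max 0 (u::real)"
      by (intro always_eventually allI) auto
    show "\<forall>\<^sub>F u in at 0. max 0 u \<le> \<bar>u::real\<bar>"
      by (intro always_eventually allI) auto
    show "((\<lambda>u::real. - \<bar>u\<bar>) \<longlongrightarrow> 0) (at 0)"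
      using tendsto_minus[OF tendsto_rabs[OF tendsto_ident_at[of "0::real" UNIV]]] by simp
    show "((\<lambda>u::real. \<bar>u\<bar>) \<longlongrightarrow> 0) (at 0)"
      using tendsto_rabs[OF tendsto_ident_at[of "0::real" UNIV]] by simp
  qed
  moreover have "(\<lambda>h. ((max 0 (0 + h))\<^sup>2 - (max 0 0)\<^sup>2) / h) = (\<lambda>h::real. max 0 h)"
    using eq by (simp add: fun_eq_iff)
  ultimately show ?thesis using True by (simp add: DERIV_def)
next
  case False
  show ?thesis
  proof (cases "t > 0")
    case True
    have "DERIV (\<lambda>t::real. t\<^sup>2) t :> 2 * t"
      by (auto intro!: derivative_eq_intros)
    moreover have "\<forall>\<^sub>F u in nhds t. u\<^sup>2 = (max 0 u)\<^sup>2"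
      using eventually_nhds_in_open[of "{0<..}" t] True
      by (auto elim!: eventually_mono)
    ultimately show ?thesis using True
      by (subst (asm) DERIV_cong_ev[OF refl _ refl]) auto
  next
    case f2: False
    then have "t < 0" using False by simp
    have "DERIV (\<lambda>t::real. 0) t :> 0" by simp
    moreover have "\<forall>\<^sub>F u in nhds t. (0::real) = (max 0 u)\<^sup>2"
      using eventually_nhds_in_open[of "{..<0}" t] \<open>t < 0\<close>
      by (auto elim!: eventually_mono)
    ultimately show ?thesis using \<open>t < 0\<close>
      by (subst (asm) DERIV_cong_ev[OF refl _ refl]) auto
  qed
qed

lemma GDERIV_sum:
  "finite A \<Longrightarrow> (\<And>i. i \<in> A \<Longrightarrow> GDERIV (f i) x :> D i) \<Longrightarrow>
     GDERIV (\<lambda>x. \<Sum>i\<in>A. f i x) x :> (\<Sum>i\<in>A. D i)"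
  by (induction A rule: finite_induct) (auto intro: GDERIV_add GDERIV_const)

lemma gderiv_normsq:
  fixes y0 :: "'a::real_inner"
  shows "GDERIV (\<lambda>y. (norm (y - y0))\<^sup>2) y :> 2 *\<^sub>R (y - y0)"
proof -
  have "((\<lambda>y. (y - y0) \<bullet> (y - y0)) has_derivative (\<lambda>h. (y - y0) \<bullet> h + h \<bullet> (y - y0))) (at y)"
    by (auto intro!: derivative_eq_intros)
  moreover have "(\<lambda>h. (y - y0) \<bullet> h + h \<bullet> (y - y0)) = (\<lambda>h. h \<bullet> (2 *\<^sub>R (y - y0)))"
    by (auto simp: inner_commute)
  ultimately show ?thesis unfolding gderiv_def by (simp add: power2_norm_eq_inner)
qed

lemma multi_subseq:
  fixes u :: "nat \<Rightarrow> nat \<Rightarrow> real"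
  assumes "\<And>k i. \<bar>u k i\<bar> \<le> C"
  shows "\<exists>\<tau> L. strict_mono \<tau> \<and> (\<forall>i<m. (\<lambda>k. u (\<tau> k) i) \<longlonglongrightarrow> L i)"
proof (induction m)
  case 0
  show ?case by (rule exI[of _ id]) (auto simp: strict_mono_def)
next
  case (Suc m)
  then obtain \<tau> L where tl: "strict_mono \<tau>" "\<forall>i<m. (\<lambda>k. u (\<tau> k) i) \<longlonglongrightarrow> L i" by blast
  have "bounded (range (\<lambda>k. u (\<tau> k) m))"
    using assms by (auto simp: bounded_iff)
  then obtain l \<tau>' where t2: "strict_mono \<tau>'" "((\<lambda>k. u (\<tau> k) m) \<circ> \<tau>') \<longlonglongrightarrow> l"
    using bounded_imp_convergent_subsequence by blast
  have "\<forall>i<Suc m. (\<lambda>k. u ((\<tau> \<circ> \<tau>') k) i) \<longlonglongrightarrow> (L(m := l)) i"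
  proof (intro allI impI)
    fix i assume "i < Suc m"
    show "(\<lambda>k. u ((\<tau> \<circ> \<tau>') k) i) \<longlonglongrightarrow> (L(m := l)) i"
    proof (cases "i = m")
      case True then show ?thesis using t2 by (simp add: o_def)
    next
      case False
      then have "i < m" using \<open>i < Suc m\<close> by simp
      from LIMSEQ_subseq_LIMSEQ[OF tl(2)[rule_format, OF this] t2(1)]
      show ?thesis using False by (simp add: o_def)
    qed
  qed
  moreover have "strict_mono (\<tau> \<circ> \<tau>')" using tl(1) t2(1) by (rule strict_mono_o)
  ultimately show ?case by blast
qed



lemma KKT:
  fixes f :: "'a::euclidean_space \<Rightarrow> real" and g h :: "nat \<Rightarrow> 'a \<Rightarrow> real"
  assumes sf: "smooth f" and sg: "\<forall>i<r. smooth (g i)" and sh: "\<forall>j<s. smooth (h j)"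
    and y0: "y0 \<in> feas g r h s" and opt: "\<forall>y\<in>feas g r h s. f y0 \<le> f y"
    and mf: "MFCQ g r h s"
  shows "\<exists>\<mu> \<kappa>. (\<forall>i<r. \<mu> i \<ge> 0 \<and> \<mu> i * g i y0 = 0) \<and>
     grad f y0 + (\<Sum>i<r. \<mu> i *\<^sub>R grad (g i) y0) + (\<Sum>j<s. \<kappa> j *\<^sub>R grad (h j) y0) = 0"
proof -
  define pen where "pen y = (\<Sum>i<r. (max 0 (g i y))\<^sup>2) + (\<Sum>j<s. (h j y)\<^sup>2)" for y
  define P where "P k y = f y + real k / 2 * pen y + 1/2 * (norm (y - y0))\<^sup>2" for k y
  have cg: "isCont (g i) y" if "i < r" for i y
    using smooth_cont[of "g i"] sg that continuous_on_eq_continuous_at by blast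
  have ch: "isCont (h j) y" if "j < s" for j y
    using smooth_cont[of "h j"] sh that continuous_on_eq_continuous_at by blast
  have cf: "isCont f y" for y
    using smooth_cont[of "f"] sf continuous_on_eq_continuous_at by blast
  have cpen: "isCont pen y" for y
    unfolding pen_def using cg ch by (auto intro!: continuous_intros)
  have cP: "continuous_on UNIV (P k)" for k
    unfolding P_def using cf cpen by (auto intro!: continuous_intros simp: continuous_on_eq_continuous_at)
  have pen_nn: "0 \<le> pen y" for y
    unfolding pen_def by (auto intro!: add_nonneg_nonneg sum_nonneg)
  have pen_y0: "pen y0 = 0"
    using y0 unfolding pen_def feas_def by (auto intro!: sum.neutral simp: max_def)
  define K where "K = cball y0 (1::real)"
  have K: "compact K" "y0 \<in> K" unfolding K_def by auto
  have "\<exists>y\<in>K. \<forall>z\<in>K. P k y \<le> P k z" for k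
    using continuous_attains_inf[OF K(1) _ continuous_on_subset[OF cP]] K(2) by blast
  then obtain yk where yk: "\<And>k. yk k \<in> K" "\<And>k z. z \<in> K \<Longrightarrow> P k (yk k) \<le> P k z" by metis
  obtain m where m: "\<And>y. y \<in> K \<Longrightarrow> m \<le> f y"
    using continuous_attains_inf[OF K(1) _ continuous_at_imp_continuous_on[of K f]] K(2) cf by blast
  have Pk: "P k (yk k) \<le> f y0" for k
    using yk(2)[OF K(2), of k] pen_y0 unfolding P_def by simp
  have pen_bound: "real k * pen (yk k) \<le> 2 * (f y0 - m)" for k
  proof -
    have "f (yk k) + real k / 2 * pen (yk k) \<le> f y0"
      using Pk[of k] zero_le_power2[of "norm (yk k - y0)"] unfolding P_def by linarith
    then show ?thesis using m[OF yk(1)[of k]] by simp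
  qed
  have fy: "f (yk k) + 1/2 * (norm (yk k - y0))\<^sup>2 \<le> f y0" for k
  proof -
    have "0 \<le> real k / 2 * pen (yk k)" using pen_nn by simp
    then show ?thesis using Pk[of k] unfolding P_def by linarith
  qed
  obtain ybar \<sigma> where sig: "ybar \<in> K" "strict_mono \<sigma>" "(yk \<circ> \<sigma>) \<longlonglongrightarrow> ybar"
    using seq_compactE[OF compact_imp_seq_compact[OF K(1)], of yk] yk(1) by metis
  have "(\<lambda>k. pen (yk (\<sigma> k))) \<longlonglongrightarrow> pen ybar"
    using isCont_tendsto_compose[OF cpen sig(3)] by (simp add: o_def)
  moreover have "(\<lambda>k. pen (yk (\<sigma> k))) \<longlonglongrightarrow> 0"
  proof (rule tendsto_sandwich[of "\<lambda>k. 0" _ _ "\<lambda>k. 2 * (f y0 - m) / real k"])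
    show "\<forall>\<^sub>F n in sequentially. 0 \<le> pen (yk (\<sigma> n))" using pen_nn by simp
    show "\<forall>\<^sub>F n in sequentially. pen (yk (\<sigma> n)) \<le> 2 * (f y0 - m) / real n"
    proof (rule eventually_sequentiallyI[of 1])
      fix n :: nat assume "1 \<le> n"
      have "n \<le> \<sigma> n" using seq_suble[OF sig(2)] .
      have fm: "0 \<le> f y0 - m" using m[OF K(2)] by simp
      have "real n * pen (yk (\<sigma> n)) \<le> real (\<sigma> n) * pen (yk (\<sigma> n))"
        using \<open>n \<le> \<sigma> n\<close> pen_nn by (intro mult_right_mono) auto
      also have "\<dots> \<le> 2 * (f y0 - m)" by (rule pen_bound)
      finally show "pen (yk (\<sigma> n)) \<le> 2 * (f y0 - m) / real n"
        using \<open>1 \<le> n\<close> by (simp add: field_simps)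
    qed
  qed (auto intro: lim_const_over_n)
  ultimately have "pen ybar = 0" by (rule LIMSEQ_unique)
  then have "ybar \<in> feas g r h s"
    unfolding pen_def feas_def
    apply (simp add: add_nonneg_eq_0_iff sum_nonneg sum_nonneg_eq_0_iff max_def split: if_splits)
    by (metis lessThan_iff linorder_le_cases order_refl)
  then have "f y0 \<le> f ybar" using opt by blast
  moreover have "f ybar + 1/2 * (norm (ybar - y0))\<^sup>2 \<le> f y0"
  proof (rule LIMSEQ_le_const2)
    show "(\<lambda>k. f (yk (\<sigma> k)) + 1/2 * (norm (yk (\<sigma> k) - y0))\<^sup>2) \<longlonglongrightarrow> f ybar + 1/2 * (norm (ybar - y0))\<^sup>2"
    proof -
      have s3: "(\<lambda>k. yk (\<sigma> k)) \<longlonglongrightarrow> ybar" using sig(3) by (simp add: o_def)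
      have a: "(\<lambda>k. f (yk (\<sigma> k))) \<longlonglongrightarrow> f ybar"
        using isCont_tendsto_compose[OF cf s3] .
      have b: "(\<lambda>k. norm (yk (\<sigma> k) - y0)) \<longlonglongrightarrow> norm (ybar - y0)"
        using tendsto_norm[OF tendsto_diff[OF s3 tendsto_const]] .
      show ?thesis using tendsto_add[OF a tendsto_mult[OF tendsto_const tendsto_power[OF b]]] .
    qed
  qed (use fy in auto)
  ultimately have "(norm (ybar - y0))\<^sup>2 \<le> 0" by linarith
  then have ybar: "ybar = y0" by simp
  define ys where "ys = yk \<circ> \<sigma>"
  have ys: "ys \<longlonglongrightarrow> y0" using sig(3) ybar ys_def by simp
  have stat_gen: "grad f y + (\<Sum>i<r. (real k * max 0 (g i y)) *\<^sub>R grad (g i) y)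
      + (\<Sum>j<s. (real k * h j y) *\<^sub>R grad (h j) y) + (y - y0) = 0"
    if yb: "y \<in> ball y0 1" and ymin: "\<forall>z\<in>K. P k y \<le> P k z" for k y
  proof -
    define Dp where "Dp = (\<Sum>i<r. (2 * max 0 (g i y)) *\<^sub>R grad (g i) y) + (\<Sum>j<s. (2 * h j y) *\<^sub>R grad (h j) y)"
    have dpen: "GDERIV pen y :> Dp"
      unfolding pen_def Dp_def
    proof (rule GDERIV_add; rule GDERIV_sum)
      fix i assume "i \<in> {..<r}"
      then show "GDERIV (\<lambda>y. (max 0 (g i y))\<^sup>2) y :> (2 * max 0 (g i y)) *\<^sub>R grad (g i) y"
        using sg by (intro GDERIV_DERIV_compose smoothD(2) deriv_maxsq) auto
    next
      fix j assume "j \<in> {..<s}"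
      have "DERIV (\<lambda>t::real. t\<^sup>2) (h j y) :> 2 * h j y" by (auto intro!: derivative_eq_intros)
      then show "GDERIV (\<lambda>y. (h j y)\<^sup>2) y :> (2 * h j y) *\<^sub>R grad (h j) y"
        using sh \<open>j \<in> {..<s}\<close> by (intro GDERIV_DERIV_compose smoothD(2)) auto
    qed auto
    define D where "D = grad f y + (real k / 2) *\<^sub>R Dp + (1/2) *\<^sub>R (2 *\<^sub>R (y - y0))"
    have "GDERIV (P k) y :> grad f y + ((real k / 2) *\<^sub>R Dp + pen y *\<^sub>R 0) + ((1/2) *\<^sub>R (2 *\<^sub>R (y - y0)) + (norm (y - y0))\<^sup>2 *\<^sub>R 0)"
      unfolding P_def[abs_def]
      by (intro GDERIV_add GDERIV_mult GDERIV_const dpen gderiv_normsq smoothD(2) sf)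
    then have dP: "GDERIV (P k) y :> D" unfolding D_def by simp
    have "eventually (\<lambda>z. z \<in> ball y0 1) (at y)"
      using yb by (intro eventually_at_in_open') auto
    then have "eventually (\<lambda>z. P k y \<le> P k z) (at y)"
      using ymin unfolding K_def by (auto elim!: eventually_mono)
    from has_derivative_local_min[OF dP[unfolded gderiv_def] this]
    have "D \<bullet> D = 0" by metis
    then have "D = 0" by simp
    moreover have "D = grad f y + (\<Sum>i<r. (real k * max 0 (g i y)) *\<^sub>R grad (g i) y)
      + (\<Sum>j<s. (real k * h j y) *\<^sub>R grad (h j) y) + (y - y0)"
      unfolding D_def Dp_def by (simp add: scaleR_sum_right scaleR_add_right)
    ultimately show ?thesis by simp
  qed
  obtain N where N: "\<And>k. k \<ge> N \<Longrightarrow> dist (ys k) y0 < 1"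
    using tendstoD[OF ys, of 1] unfolding eventually_sequentially by auto
  define a where "a k i = real (\<sigma> k) * max 0 (g i (ys k))" for k i
  define b where "b k j = real (\<sigma> k) * h j (ys k)" for k j
  define L where "L k = 1 + (\<Sum>i<r. a k i) + (\<Sum>j<s. \<bar>b k j\<bar>)" for k
  have a_nn: "0 \<le> a k i" for k i unfolding a_def by simp
  have L1: "1 \<le> L k" for k unfolding L_def using a_nn by (simp add: sum_nonneg)
  have aL: "a k i \<le> L k" if "i < r" for k i
  proof -
    have "a k i \<le> (\<Sum>i<r. a k i)" using that a_nn by (intro member_le_sum) auto
    moreover have "0 \<le> (\<Sum>j<s. \<bar>b k j\<bar>)" by (simp add: sum_nonneg)
    ultimately show ?thesis unfolding L_def by linarith
  qed
  have bL: "\<bar>b k j\<bar> \<le> L k" if "j < s" for k j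
  proof -
    have "\<bar>b k j\<bar> \<le> (\<Sum>j<s. \<bar>b k j\<bar>)" using that by (intro member_le_sum) auto
    moreover have "0 \<le> (\<Sum>i<r. a k i)" using a_nn by (simp add: sum_nonneg)
    ultimately show ?thesis unfolding L_def by linarith
  qed
  have stat: "grad f (ys k) + (\<Sum>i<r. a k i *\<^sub>R grad (g i) (ys k))
      + (\<Sum>j<s. b k j *\<^sub>R grad (h j) (ys k)) + (ys k - y0) = 0" if "k \<ge> N" for k
  proof -
    have "ys k \<in> ball y0 1" using N[OF that] by (simp add: dist_commute)
    moreover have "\<forall>z\<in>K. P (\<sigma> k) (ys k) \<le> P (\<sigma> k) z" using yk(2) unfolding ys_def by simp
    ultimately show ?thesis using stat_gen[of "ys k" "\<sigma> k"] unfolding a_def b_def by simp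
  qed
  define lam where "lam k = 1 / L k" for k
  define al where "al k i = a k i / L k" for k i
  define be where "be k j = b k j / L k" for k j
  define u where "u k i = (if i < r then al k i else if i < r + s then be k (i - r) else lam k)" for k i
  have ub: "\<bar>u k i\<bar> \<le> 1" for k i
  proof -
    have Lp: "0 < L k" using L1[of k] by simp
    consider "i < r" | "\<not> i < r" "i < r + s" | "\<not> i < r + s" by linarith
    then show ?thesis
    proof cases
      case 1
      then have "u k i = a k i / L k" unfolding u_def al_def by simp
      moreover have "0 \<le> a k i / L k" using a_nn[of k i] Lp by simp
      moreover have "a k i / L k \<le> 1" using aL[OF 1, of k] Lp by (simp add: divide_le_eq_1)
      ultimately show ?thesis by simp
    next
      case 2
      then have "u k i = b k (i - r) / L k" unfolding u_def be_def by simp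
      moreover have "i - r < s" using 2 by simp
      then have "\<bar>b k (i - r)\<bar> / L k \<le> 1" using bL[of "i - r" k] Lp by (simp add: divide_le_eq_1)
      ultimately show ?thesis using Lp by (simp add: abs_divide)
    next
      case 3
      then have "u k i = 1 / L k" unfolding u_def lam_def by simp
      then show ?thesis using L1[of k] Lp by simp
    qed
  qed
  obtain \<tau> Lim where tau: "strict_mono \<tau>" "\<forall>i<r+s+1. (\<lambda>k. u (\<tau> k) i) \<longlonglongrightarrow> Lim i"
  proof -
    have "\<exists>\<tau> Lim. strict_mono \<tau> \<and> (\<forall>i<r+s+1. (\<lambda>k. u (\<tau> k) i) \<longlonglongrightarrow> Lim i)"
      by (rule multi_subseq[of u 1 "r+s+1"]) (rule ub)
    then show ?thesis using that by blast
  qed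
  define A where "A i = Lim i" for i
  define B where "B j = Lim (r + j)" for j
  define l0 where "l0 = Lim (r + s)"
  have alc: "(\<lambda>k. al (\<tau> k) i) \<longlonglongrightarrow> A i" if "i < r" for i
    using tau(2)[rule_format, of i] that unfolding u_def A_def by simp
  have bec: "(\<lambda>k. be (\<tau> k) j) \<longlonglongrightarrow> B j" if "j < s" for j
    using tau(2)[rule_format, of "r + j"] that unfolding u_def B_def by simp
  have lamc: "(\<lambda>k. lam (\<tau> k)) \<longlonglongrightarrow> l0"
    using tau(2)[rule_format, of "r + s"] unfolding u_def l0_def by simp
  have Lp: "0 < L k" for k using L1[of k] by simp
  have sum1: "lam k + (\<Sum>i<r. al k i) + (\<Sum>j<s. \<bar>be k j\<bar>) = 1" for k
  proof -
    have e1: "(\<Sum>i<r. al k i) = (\<Sum>i<r. a k i) / L k" unfolding al_def by (simp add: sum_divide_distrib)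
    have e2: "(\<Sum>j<s. \<bar>be k j\<bar>) = (\<Sum>j<s. \<bar>b k j\<bar>) / L k"
      unfolding be_def using Lp[of k] by (simp add: sum_divide_distrib abs_divide)
    show ?thesis unfolding e1 e2 lam_def using Lp[of k]
      by (simp add: L_def add_divide_distrib[symmetric])
  qed
  have sumlim: "l0 + (\<Sum>i<r. A i) + (\<Sum>j<s. \<bar>B j\<bar>) = 1"
  proof -
    have "(\<lambda>k. lam (\<tau> k) + (\<Sum>i<r. al (\<tau> k) i) + (\<Sum>j<s. \<bar>be (\<tau> k) j\<bar>))
        \<longlonglongrightarrow> l0 + (\<Sum>i<r. A i) + (\<Sum>j<s. \<bar>B j\<bar>)"
      by (intro tendsto_add lamc tendsto_sum tendsto_rabs alc bec) auto
    then show ?thesis unfolding sum1 by (simp add: LIMSEQ_const_iff)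
  qed
  have A_nn: "0 \<le> A i" if "i < r" for i
    by (rule LIMSEQ_le_const[OF alc[OF that]]) (auto simp: al_def a_nn Lp less_imp_le)
  have l0_nn: "0 \<le> l0"
    by (rule LIMSEQ_le_const[OF lamc]) (auto simp: lam_def Lp less_imp_le)
  have zt: "(\<lambda>k. ys (\<tau> k)) \<longlonglongrightarrow> y0"
    using LIMSEQ_subseq_LIMSEQ[OF ys tau(1)] by (simp add: o_def)
  have compl: "A i = 0" if "i < r" "g i y0 < 0" for i
  proof -
    have "eventually (\<lambda>k. g i (ys (\<tau> k)) < 0) sequentially"
      using order_tendstoD(2)[OF isCont_tendsto_compose[OF cg[OF that(1)] zt] that(2)] .
    then have "eventually (\<lambda>k. 0 = al (\<tau> k) i) sequentially"
      by (auto elim!: eventually_mono simp: al_def a_def)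
    from Lim_transform_eventually[OF tendsto_const this]
    have "(\<lambda>k. al (\<tau> k) i) \<longlonglongrightarrow> 0" .
    then show ?thesis using alc[OF that(1)] LIMSEQ_unique by blast
  qed
  define E where "E k = lam k *\<^sub>R grad f (ys k) + (\<Sum>i<r. al k i *\<^sub>R grad (g i) (ys k))
      + (\<Sum>j<s. be k j *\<^sub>R grad (h j) (ys k)) + lam k *\<^sub>R (ys k - y0)" for k
  have E0: "E k = 0" if "k \<ge> N" for k
  proof -
    have "(1 / L k) *\<^sub>R (grad f (ys k) + (\<Sum>i<r. a k i *\<^sub>R grad (g i) (ys k))
      + (\<Sum>j<s. b k j *\<^sub>R grad (h j) (ys k)) + (ys k - y0)) = 0"
      using stat[OF that] by simp
    then show ?thesis unfolding E_def lam_def al_def be_def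
      by (simp add: scaleR_add_right scaleR_sum_right)
  qed
  have cgrad: "isCont (grad q) y0" if "smooth q" for q :: "'a \<Rightarrow> real"
    using smoothD(1)[OF that] continuous_on_eq_continuous_at by blast
  have "(\<lambda>k. E (\<tau> k)) \<longlonglongrightarrow> l0 *\<^sub>R grad f y0 + (\<Sum>i<r. A i *\<^sub>R grad (g i) y0)
      + (\<Sum>j<s. B j *\<^sub>R grad (h j) y0) + l0 *\<^sub>R (y0 - y0)"
    unfolding E_def
    apply (intro tendsto_add tendsto_scaleR lamc tendsto_sum alc bec tendsto_diff zt tendsto_const
        isCont_tendsto_compose[OF cgrad[OF sf]])
    using sg sh by (auto intro!: isCont_tendsto_compose[OF cgrad] zt)
  moreover have "(\<lambda>k. E (\<tau> k)) \<longlonglongrightarrow> 0"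
  proof (rule Lim_transform_eventually[OF tendsto_const])
    show "\<forall>\<^sub>F k in sequentially. 0 = E (\<tau> k)"
      unfolding eventually_sequentially
      using E0 seq_suble[OF tau(1)] le_trans by metis
  qed
  ultimately have eq0: "l0 *\<^sub>R grad f y0 + (\<Sum>i<r. A i *\<^sub>R grad (g i) y0)
      + (\<Sum>j<s. B j *\<^sub>R grad (h j) y0) = 0"
    using LIMSEQ_unique by fastforce
  have mfy: "(\<forall>c. (\<Sum>j<s. c j *\<^sub>R grad (h j) y0) = 0 \<longrightarrow> (\<forall>j<s. c j = 0))"
    "(\<exists>v. (\<forall>i<r. g i y0 = 0 \<longrightarrow> grad (g i) y0 \<bullet> v < 0) \<and> (\<forall>j<s. grad (h j) y0 \<bullet> v = 0))"
    using mf y0 unfolding MFCQ_def by auto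
  have gle: "g i y0 \<le> 0" if "i < r" for i using y0 that unfolding feas_def by auto
  have "l0 \<noteq> 0"
  proof
    assume l00: "l0 = 0"
    obtain v where v: "\<And>i. i<r \<Longrightarrow> g i y0 = 0 \<Longrightarrow> grad (g i) y0 \<bullet> v < 0"
      "\<And>j. j<s \<Longrightarrow> grad (h j) y0 \<bullet> v = 0" using mfy(2) by blast
    have eq1: "(\<Sum>i<r. A i *\<^sub>R grad (g i) y0) + (\<Sum>j<s. B j *\<^sub>R grad (h j) y0) = 0"
      using eq0 l00 by simp
    then have "((\<Sum>i<r. A i *\<^sub>R grad (g i) y0) + (\<Sum>j<s. B j *\<^sub>R grad (h j) y0)) \<bullet> v = 0" by simp
    then have "(\<Sum>i<r. A i * (grad (g i) y0 \<bullet> v)) + (\<Sum>j<s. B j * (grad (h j) y0 \<bullet> v)) = 0"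
      by (simp add: inner_add_left inner_sum_left)
    moreover have "(\<Sum>j<s. B j * (grad (h j) y0 \<bullet> v)) = 0" using v(2) by simp
    ultimately have s0: "(\<Sum>i<r. - (A i * (grad (g i) y0 \<bullet> v))) = 0"
      by (simp add: sum_negf)
    have tnn: "0 \<le> - (A i * (grad (g i) y0 \<bullet> v))" if "i < r" for i
    proof (cases "g i y0 = 0")
      case True
      then show ?thesis using v(1)[OF that True] A_nn[OF that]
        by (simp add: mult_nonneg_nonpos less_imp_le)
    next
      case False
      then show ?thesis using compl[OF that] gle[OF that] by simp
    qed
    have A0: "A i = 0" if "i < r" for i
    proof (cases "g i y0 = 0")
      case True
      have "- (A i * (grad (g i) y0 \<bullet> v)) = 0"
        using sum_nonneg_eq_0_iff[of "{..<r}" "\<lambda>i. - (A i * (grad (g i) y0 \<bullet> v))"] s0 tnn that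
        by auto
      then show ?thesis using v(1)[OF that True] by simp
    next
      case False
      then show ?thesis using compl[OF that] gle[OF that] by simp
    qed
    then have "(\<Sum>j<s. B j *\<^sub>R grad (h j) y0) = 0" using eq1 by simp
    then have "\<forall>j<s. B j = 0" using mfy(1) by blast
    then show False using sumlim l00 A0 by simp
  qed
  then have l0p: "0 < l0" using l0_nn by simp
  define \<mu> where "\<mu> i = A i / l0" for i
  define \<kappa> where "\<kappa> j = B j / l0" for j
  have "(1 / l0) *\<^sub>R (l0 *\<^sub>R grad f y0 + (\<Sum>i<r. A i *\<^sub>R grad (g i) y0)
      + (\<Sum>j<s. B j *\<^sub>R grad (h j) y0)) = 0" using eq0 by simp
  then have "grad f y0 + (\<Sum>i<r. \<mu> i *\<^sub>R grad (g i) y0) + (\<Sum>j<s. \<kappa> j *\<^sub>R grad (h j) y0) = 0"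
    unfolding \<mu>_def \<kappa>_def using l0p by (simp add: scaleR_add_right scaleR_sum_right)
  moreover have "\<forall>i<r. \<mu> i \<ge> 0 \<and> \<mu> i * g i y0 = 0"
  proof (intro allI impI conjI)
    fix i assume "i < r"
    show "\<mu> i \<ge> 0" unfolding \<mu>_def using A_nn[OF \<open>i < r\<close>] l0p by simp
    show "\<mu> i * g i y0 = 0" unfolding \<mu>_def using compl[OF \<open>i < r\<close>] gle[OF \<open>i < r\<close>]
      by (cases "g i y0 = 0") auto
  qed
  ultimately show ?thesis by blast
qed



lemma quad_bound:
  fixes a t c \<rho> M C :: real
  assumes "\<rho> > 0" "0 \<le> t" "0 \<le> a" "a \<le> M" "- c \<le> C" "0 \<le> C" "c \<le> a * t - \<rho> / 2 * t\<^sup>2"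
  shows "t \<le> 2 * (M + C + 1) / \<rho> + 1"
proof (rule ccontr)
  assume "\<not> ?thesis"
  then have t: "t > 2 * (M + C + 1) / \<rho> + 1" by simp
  have M0: "0 \<le> M" using assms by simp
  have "2 * (M + C + 1) / \<rho> \<ge> 0" using assms M0 by simp
  then have t1: "t > 1" using t by simp
  have "\<rho> * t > 2 * (M + C + 1)" using t assms(1) by (simp add: field_simps)
  then have "\<rho> / 2 * t > M + C + 1" by simp
  then have "\<rho> / 2 * t * t > (M + C + 1) * t" using t1 by (intro mult_strict_right_mono) auto
  moreover have "(M + C + 1) * t \<ge> a * t + C"
  proof -
    have "M * t \<ge> a * t" using assms t1 by (intro mult_right_mono) auto
    moreover have "C * t \<ge> C" using assms(6) t1 by (simp add: mult_le_cancel_left1)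
    moreover have "(M + C + 1) * t = M * t + C * t + t" by (simp add: algebra_simps)
    ultimately show ?thesis using t1 by linarith
  qed
  ultimately have "\<rho> / 2 * t\<^sup>2 > a * t + C" by (simp add: power2_eq_square algebra_simps)
  then show False using assms(5,7) by linarith
qed

lemma quad_max:
  fixes a t \<rho> :: real
  assumes "\<rho> > 0"
  shows "a * t - \<rho> / 2 * t\<^sup>2 \<le> a\<^sup>2 / (2 * \<rho>)"
proof -
  have "0 \<le> (a - \<rho> * t)\<^sup>2" by simp
  then have "0 \<le> a\<^sup>2 - 2 * \<rho> * (a * t - \<rho> / 2 * t\<^sup>2)" by (simp add: power2_eq_square algebra_simps)
  then show ?thesis using assms by (simp add: field_simps)
qed

lemma closed_feas:
  assumes "\<forall>i<r. continuous_on UNIV (g i)" "\<forall>j<s. continuous_on UNIV (h j)"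
  shows "closed (feas g r h s)"
proof -
  have "feas g r h s = (\<Inter>i\<in>{..<r}. {x. g i x \<le> 0}) \<inter> (\<Inter>j\<in>{..<s}. {x. h j x = 0})"
    unfolding feas_def by auto
  moreover have "closed (\<Inter>i\<in>{..<r}. {x. g i x \<le> 0})"
    using assms(1) by (intro closed_INT ballI closed_Collect_le) (auto intro: continuous_on_const)
  moreover have "closed (\<Inter>j\<in>{..<s}. {x. h j x = 0})"
    using assms(2) by (intro closed_INT ballI closed_Collect_eq) (auto intro: continuous_on_const)
  ultimately show ?thesis by auto
qed



theorem lemma3p6:
  fixes F :: "real^'n \<Rightarrow> real^'n"
    and g h :: "nat \<Rightarrow> real^'n \<Rightarrow> real"
    and r s :: nat and \<rho> :: real
    and \<phi> :: "(real^'n) \<times> (real^'n) \<Rightarrow> real" and \<psi> :: "real^'n \<Rightarrow> real"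
  assumes "poly_map F"
    and "\<forall>i<r. g i \<in> poly_fun" and "\<forall>j<s. h j \<in> poly_fun"
    and "feas g r h s \<noteq> {}"
    and "\<rho> > 0"
    and "\<And>x y. \<phi> (x, y) = F x \<bullet> (x - y) - \<rho> / 2 * (norm (x - y))\<^sup>2"
    and "\<And>x. \<psi> x = (SUP y \<in> feas g r h s. \<phi> (x, y))"
    and "MFCQ g r h s"
  shows "clarke_subdiff \<psi> x \<subseteq> convex hull (\<Union>y \<in> {y \<in> feas g r h s. \<psi> x = \<phi> (x, y)}.
           {v. \<exists>w \<in> normal_cone g r h s y. (v, 0) = grad \<phi> (x, y) - (0, w)})"
proof -
  note phi_def = assms(6)
  have sg: "\<forall>i<r. smooth (g i)" using assms(2) smooth_poly by blast
  have sh: "\<forall>j<s. smooth (h j)" using assms(3) smooth_poly by blast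
  have sFi: "smooth (\<lambda>x. F x $ i)" for i
    using assms(1) smooth_poly unfolding poly_map_def by blast
  have cF: "continuous_on UNIV F"
  proof -
    have "continuous_on UNIV (\<lambda>x. \<chi> i. F x $ i)"
      by (intro continuous_on_vec_lambda smooth_cont sFi)
    then show ?thesis by simp
  qed
  have phi_eq: "\<phi> = (\<lambda>z. (\<Sum>i\<in>UNIV. F (fst z) $ i * (fst z $ i - snd z $ i))
      - \<rho> / 2 * (\<Sum>i\<in>UNIV. (fst z $ i - snd z $ i) * (fst z $ i - snd z $ i)))"
  proof
    fix z :: "(real^'n) \<times> (real^'n)"
    obtain x y where z: "z = (x, y)" by (cases z)
    show "\<phi> z = (\<Sum>i\<in>UNIV. F (fst z) $ i * (fst z $ i - snd z $ i))
      - \<rho> / 2 * (\<Sum>i\<in>UNIV. (fst z $ i - snd z $ i) * (fst z $ i - snd z $ i))"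
      unfolding z using phi_def[of x y] by (simp add: inner_vec_def power2_norm_eq_inner)
  qed
  have sphi: "smooth \<phi>"
    unfolding phi_eq
    by (intro smooth_diff smooth_sum smooth_mult smooth_const smooth_fst smooth_snd sFi smooth_coord) auto
  have cphi: "isCont \<phi> z" for z
    using smooth_cont[OF sphi] continuous_on_eq_continuous_at by blast
  have cgphi: "isCont (grad \<phi>) z" for z
    using smoothD(1)[OF sphi] continuous_on_eq_continuous_at by blast
  have dphi: "GDERIV \<phi> z :> grad \<phi> z" for z using smoothD(2)[OF sphi] .
  have cg: "\<forall>i<r. continuous_on UNIV (g i)" using sg smooth_cont by blast
  have ch: "\<forall>j<s. continuous_on UNIV (h j)" using sh smooth_cont by blast
  have clo: "closed (feas g r h s)" using closed_feas[OF cg ch] .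
  obtain y0 where y0: "y0 \<in> feas g r h s" using assms(4) by blast
  have phi_le: "\<phi> (x', z) \<le> norm (F x') * norm (x' - z) - \<rho> / 2 * (norm (x' - z))\<^sup>2" for x' z
    using phi_def[of x' z] norm_cauchy_schwarz[of "F x'" "x' - z"] by simp
  have bdd: "bdd_above ((\<lambda>y. \<phi> (x', y)) ` feas g r h s)" for x'
  proof (rule bdd_aboveI2)
    fix y show "\<phi> (x', y) \<le> (norm (F x'))\<^sup>2 / (2 * \<rho>)"
      using phi_le[of x' y] quad_max[OF assms(5), of "norm (F x')" "norm (x' - y)"] by linarith
  qed
  have psi_eq: "\<psi> x' = \<phi> (x', y)" if "y \<in> feas g r h s" "\<forall>z\<in>feas g r h s. \<phi> (x', z) \<le> \<phi> (x', y)" for x' y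
    unfolding assms(7) using that by (intro cSup_eq_maximum) auto
  have psi_ge: "\<phi> (x', y) \<le> \<psi> x'" if "y \<in> feas g r h s" for x' y
    unfolding assms(7) using that bdd by (intro cSUP_upper) auto
  have argmax: "\<exists>y\<in>feas g r h s. \<forall>z\<in>feas g r h s. \<phi> (x', z) \<le> \<phi> (x', y)" for x'
  proof -
    define c where "c = \<phi> (x', y0)"
    define R where "R = 2 * (norm (F x') + \<bar>c\<bar> + 1) / \<rho> + 1"
    have far: "norm (x' - z) \<le> R" if "c \<le> \<phi> (x', z)" for z
      unfolding R_def
      by (rule quad_bound[OF assms(5) norm_ge_zero norm_ge_zero order_refl _ abs_ge_zero])
         (use that phi_le[of x' z] in auto)
    define K where "K = feas g r h s \<inter> cball x' R"
    have Kc: "compact K" unfolding K_def using clo by (intro closed_Int_compact) auto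
    have y0K: "y0 \<in> K" unfolding K_def using y0 far[of y0] by (simp add: c_def dist_norm)
    have "continuous_on K (\<lambda>z. \<phi> (x', z))"
    proof (intro continuous_at_imp_continuous_on ballI)
      fix z show "isCont (\<lambda>z. \<phi> (x', z)) z"
        unfolding isCont_def by (rule isCont_tendsto_compose[OF cphi]) (intro tendsto_intros)
    qed
    then obtain y where y: "y \<in> K" "\<forall>z\<in>K. \<phi> (x', z) \<le> \<phi> (x', y)"
      using continuous_attains_sup[OF Kc] y0K by blast
    have "\<phi> (x', z) \<le> \<phi> (x', y)" if "z \<in> feas g r h s" for z
    proof (cases "z \<in> K")
      case True then show ?thesis using y by blast
    next
      case False
      then have "norm (x' - z) > R" using that unfolding K_def by (auto simp: dist_norm)
      then have "\<phi> (x', z) < c" using far[of z] by linarith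
      moreover have "c \<le> \<phi> (x', y)" using y y0K unfolding c_def by blast
      ultimately show ?thesis by simp
    qed
    then show ?thesis using y(1) unfolding K_def by blast
  qed
  show ?thesis
    unfolding clarke_subdiff_def
  proof (rule hull_mono, rule subsetI)
    fix v assume "v \<in> {v. \<exists>xs gs. xs \<longlonglongrightarrow> x \<and> (\<forall>k. GDERIV \<psi> (xs k) :> gs k) \<and> gs \<longlonglongrightarrow> v}"
    then obtain xs gs where xs: "xs \<longlonglongrightarrow> x" and gs: "\<And>k. GDERIV \<psi> (xs k) :> gs k" and gv: "gs \<longlonglongrightarrow> v"
      by blast
    have "\<forall>k. \<exists>y. y \<in> feas g r h s \<and> (\<forall>z\<in>feas g r h s. \<phi> (xs k, z) \<le> \<phi> (xs k, y))"
      using argmax by blast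
    from choice[OF this] obtain ys where ys: "\<And>k. ys k \<in> feas g r h s"
      "\<And>k z. z \<in> feas g r h s \<Longrightarrow> \<phi> (xs k, z) \<le> \<phi> (xs k, ys k)" by blast
    have dan: "gs k = fst (grad \<phi> (xs k, ys k))" for k
    proof -
      define D where "D = gs k - fst (grad \<phi> (xs k, ys k))"
      have "GDERIV (\<lambda>x'. \<psi> x' - \<phi> (x', ys k)) (xs k) :> D"
        unfolding D_def by (intro GDERIV_diff gs gderiv_slice1 dphi)
      moreover have "eventually (\<lambda>x'. \<psi> (xs k) - \<phi> (xs k, ys k) \<le> \<psi> x' - \<phi> (x', ys k)) (at (xs k))"
      proof (intro always_eventually allI)
        fix x'
        have "\<psi> (xs k) = \<phi> (xs k, ys k)" using psi_eq ys by blast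
        moreover have "\<phi> (x', ys k) \<le> \<psi> x'" using psi_ge ys by blast
        ultimately show "\<psi> (xs k) - \<phi> (xs k, ys k) \<le> \<psi> x' - \<phi> (x', ys k)" by simp
      qed
      ultimately have "(\<lambda>h. h \<bullet> D) = (\<lambda>h. 0)"
        unfolding gderiv_def by (rule has_derivative_local_min)
      then have "D \<bullet> D = 0" by metis
      then show ?thesis unfolding D_def by simp
    qed
    obtain B where B: "\<And>k. norm (xs k) \<le> B"
      using convergent_imp_bounded[OF xs] unfolding bounded_iff by auto
    have Fx: "(\<lambda>k. F (xs k)) \<longlonglongrightarrow> F x"
      using isCont_tendsto_compose[OF _ xs] cF continuous_on_eq_continuous_at by blast
    obtain M where M: "\<And>k. norm (F (xs k)) \<le> M"
      using convergent_imp_bounded[OF Fx] unfolding bounded_iff by auto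
    have px: "(\<lambda>k. \<phi> (xs k, y0)) \<longlonglongrightarrow> \<phi> (x, y0)"
      by (rule isCont_tendsto_compose[OF cphi]) (intro tendsto_intros xs)
    obtain C0 where C0: "\<And>k. norm (\<phi> (xs k, y0)) \<le> C0"
      using convergent_imp_bounded[OF px] unfolding bounded_iff by auto
    define C where "C = \<bar>C0\<bar>"
    define R where "R = 2 * (M + C + 1) / \<rho> + 1"
    have dist_ys: "norm (xs k - ys k) \<le> R" for k
      unfolding R_def
    proof (rule quad_bound[OF assms(5) norm_ge_zero norm_ge_zero M])
      show "- \<phi> (xs k, y0) \<le> C" using C0[of k] unfolding C_def by auto
      show "0 \<le> C" unfolding C_def by simp
      show "\<phi> (xs k, y0) \<le> norm (F (xs k)) * norm (xs k - ys k) - \<rho> / 2 * (norm (xs k - ys k))\<^sup>2"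
        using ys(2)[OF y0, of k] phi_le[of "xs k" "ys k"] by linarith
    qed
    have "norm (ys k) \<le> B + R" for k
      using norm_triangle_ineq4[of "xs k" "ys k"] B[of k] dist_ys[of k]
      by (smt (verit) norm_minus_commute norm_triangle_ineq2)
    then have "bounded (range ys)" unfolding bounded_iff by blast
    then obtain ystar \<sigma> where sig: "strict_mono \<sigma>" "(ys \<circ> \<sigma>) \<longlonglongrightarrow> ystar"
      using bounded_imp_convergent_subsequence by blast
    have ysig: "(\<lambda>k. ys (\<sigma> k)) \<longlonglongrightarrow> ystar" using sig(2) by (simp add: o_def)
    have xsig: "(\<lambda>k. xs (\<sigma> k)) \<longlonglongrightarrow> x" using LIMSEQ_subseq_LIMSEQ[OF xs sig(1)] by (simp add: o_def)
    have ystar: "ystar \<in> feas g r h s"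
      using closed_sequentially[OF clo _ ysig] ys(1) by blast
    have opt: "\<phi> (x, z) \<le> \<phi> (x, ystar)" if "z \<in> feas g r h s" for z
    proof (rule LIMSEQ_le)
      show "(\<lambda>k. \<phi> (xs (\<sigma> k), z)) \<longlonglongrightarrow> \<phi> (x, z)"
        by (rule isCont_tendsto_compose[OF cphi]) (intro tendsto_intros xsig)
      show "(\<lambda>k. \<phi> (xs (\<sigma> k), ys (\<sigma> k))) \<longlonglongrightarrow> \<phi> (x, ystar)"
        by (rule isCont_tendsto_compose[OF cphi]) (intro tendsto_intros xsig ysig)
      show "\<exists>N. \<forall>n\<ge>N. \<phi> (xs (\<sigma> n), z) \<le> \<phi> (xs (\<sigma> n), ys (\<sigma> n))"
        using ys(2)[OF that] by blast
    qed
    have psix: "\<psi> x = \<phi> (x, ystar)" using psi_eq ystar opt by blast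
    have "(\<lambda>k. gs (\<sigma> k)) \<longlonglongrightarrow> v" using LIMSEQ_subseq_LIMSEQ[OF gv sig(1)] by (simp add: o_def)
    moreover have "(\<lambda>k. gs (\<sigma> k)) \<longlonglongrightarrow> fst (grad \<phi> (x, ystar))"
      unfolding dan
      by (intro tendsto_fst isCont_tendsto_compose[OF cgphi] tendsto_intros xsig ysig)
    ultimately have vfst: "v = fst (grad \<phi> (x, ystar))" by (rule LIMSEQ_unique)
    define w where "w = snd (grad \<phi> (x, ystar))"
    define f where "f y = - \<phi> (x, y)" for y
    have df: "GDERIV f y :> - snd (grad \<phi> (x, y))" for y
      unfolding f_def[abs_def] by (intro GDERIV_minus gderiv_slice2 dphi)
    have sf: "smooth f"
      unfolding smooth_def
    proof (intro exI[of _ "\<lambda>y. - snd (grad \<phi> (x, y))"] conjI allI df)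
      show "continuous_on UNIV (\<lambda>y. - snd (grad \<phi> (x, y)))"
      proof (intro continuous_at_imp_continuous_on ballI)
        fix y show "isCont (\<lambda>y. - snd (grad \<phi> (x, y))) y"
          unfolding isCont_def
          by (intro tendsto_minus tendsto_snd isCont_tendsto_compose[OF cgphi] tendsto_intros)
      qed
    qed
    have "\<forall>y\<in>feas g r h s. f ystar \<le> f y" unfolding f_def using opt by simp
    from KKT[OF sf sg sh ystar this assms(8)]
    obtain \<mu> \<kappa> where mk: "\<forall>i<r. \<mu> i \<ge> 0 \<and> \<mu> i * g i ystar = 0"
      "grad f ystar + (\<Sum>i<r. \<mu> i *\<^sub>R grad (g i) ystar) + (\<Sum>j<s. \<kappa> j *\<^sub>R grad (h j) ystar) = 0"
      by blast
    have "grad f ystar = - w" unfolding w_def using grad_eq[OF df] .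
    then have "w = (\<Sum>i<r. \<mu> i *\<^sub>R grad (g i) ystar) + (\<Sum>j<s. \<kappa> j *\<^sub>R grad (h j) ystar)"
      using mk(2) by (simp add: algebra_simps)
    then have wN: "w \<in> normal_cone g r h s ystar"
      unfolding normal_cone_def using mk(1) by blast
    have "(v, 0) = grad \<phi> (x, ystar) - (0, w)"
      unfolding vfst w_def by (simp add: prod_eq_iff)
    then show "v \<in> (\<Union>y \<in> {y \<in> feas g r h s. \<psi> x = \<phi> (x, y)}.
           {v. \<exists>w \<in> normal_cone g r h s y. (v, 0) = grad \<phi> (x, y) - (0, w)})"
      using wN ystar psix by blast
  qed
qed

end
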